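(* Let $\ell$ be a nondegenerate Hermitian form on a complex $n$-dimensional space $W$, $A$ an $\ell$-self-adjoint antilinear operator, and $\lambda>0$ such that $\lambda^2$ is an eigenvalue of $A^2$. Let $W_\lambda^{(m)}=\ker(A^2-\lambda^2I)^m$ and let $s_1$ be the least positive integer with $W_\lambda^{(s_1)}=W_\lambda^{(n)}$. Then there exists a vector $v\in W_\lambda^{(n)}$ (which can be taken with $(A-\lambda I)^{s_1}v=0$) such that $$V=\mathrm{span}_{\mathbb C}\{v,(A-\lambda I)v,\dots,(A-\lambda I)^{s_1-1}v\}$$ is an $s_1$-dimensional $A$-invariant subspace on which $\ell$ is nondegenerate.
   Context: An antilinear operator satisfies $A(zv+w)=\bar zAv+Aw$; $\ell$ is linear in the first argument and conjugate-linear in the second; $A$ is $\ell$-self-adjoint if $\ell(Av,w)=\ell(Aw,v)$ for all $v,w$. *)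

theory Defs
  imports "HOL-Analysis.Analysis"
begin

text \<open>The complex n-dimensional space W is modelled as complex ^ 'n (n = CARD('n)),
  with complex scalar multiplication *s; complex spans/dimensions are vec.span / vec.dim.\<close>

definition antilinear :: "(complex^'n \<Rightarrow> complex^'n) \<Rightarrow> bool" where
  "antilinear A \<longleftrightarrow> (\<forall>z v w. A (z *s v + w) = cnj z *s A v + A w)"

definition hermitian_form :: "(complex^'n \<Rightarrow> complex^'n \<Rightarrow> complex) \<Rightarrow> bool" where
  "hermitian_form l \<longleftrightarrow>
     (\<forall>z u v w. l (z *s u + v) w = z * l u w + l v w) \<and>
     (\<forall>z u v w. l w (z *s u + v) = cnj z * l w u + l w v) \<and>
     (\<forall>v w. l v w = cnj (l w v))"

definition nondegenerate_on :: "(complex^'n \<Rightarrow> complex^'n \<Rightarrow> complex) \<Rightarrow> (complex^'n) set \<Rightarrow> bool" where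
  "nondegenerate_on l V \<longleftrightarrow> (\<forall>x\<in>V. (\<forall>y\<in>V. l x y = 0) \<longrightarrow> x = 0)"

definition self_adjoint_wrt :: "(complex^'n \<Rightarrow> complex^'n \<Rightarrow> complex) \<Rightarrow> (complex^'n \<Rightarrow> complex^'n) \<Rightarrow> bool" where
  "self_adjoint_wrt l A \<longleftrightarrow> (\<forall>v w. l (A v) w = l (A w) v)"

definition gen_eigenspace :: "(complex^'n \<Rightarrow> complex^'n) \<Rightarrow> real \<Rightarrow> nat \<Rightarrow> (complex^'n) set" where
  "gen_eigenspace A lam m =
     {v. ((\<lambda>x. A (A x) - complex_of_real (lam^2) *s x) ^^ m) v = 0}"

definition shiftop :: "(complex^'n \<Rightarrow> complex^'n) \<Rightarrow> real \<Rightarrow> complex^'n \<Rightarrow> complex^'n" where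
  "shiftop A lam = (\<lambda>x. A x - complex_of_real lam *s x)"

end

theory Submission
  imports Defs
begin


context finite_dimensional_vector_space
begin

lemma lin_pow: "Vector_Spaces.linear scale scale f \<Longrightarrow> Vector_Spaces.linear scale scale (f^^j)"
proof (induction j)
  case 0 thus ?case by (simp add: Vector_Spaces.linear_iff vector_space_axioms)
next
  case (Suc j)
  have "f^^Suc j = (f^^j) o f" by (simp only: funpow_Suc_right)
  thus ?case using Suc Vector_Spaces.linear_compose by metis
qed

lemma lin_0: "Vector_Spaces.linear scale scale f \<Longrightarrow> f 0 = 0"
  proof -
  assume "Vector_Spaces.linear scale scale f"
  hence "f (0 + 0) = f 0 + f 0" unfolding Vector_Spaces.linear_iff by blast
  thus ?thesis by simp
qed

lemma ker_pow_subspace: "Vector_Spaces.linear scale scale f \<Longrightarrow> subspace {x. (f^^j) x = 0}"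
proof -
  assume lf: "Vector_Spaces.linear scale scale f"
  have l: "Vector_Spaces.linear scale scale (f^^j)" using lin_pow lf by blast
  show ?thesis using l lin_0[OF l] unfolding subspace_def Vector_Spaces.linear_iff by auto
qed

lemma ker_stab:
  assumes lf: "Vector_Spaces.linear scale scale f" and d: "dimension \<le> K" and x: "(f^^m) x = 0"
  shows "(f^^K) x = 0"
proof -
  define Ks where "Ks j = {x. (f^^j) x = 0}" for j
  have f0: "(f^^j) 0 = 0" for j
    using lin_0[OF lin_pow[OF lf]] by blast
  have mono: "Ks j \<subseteq> Ks (j+d)" for j d
    by (auto simp: Ks_def f0 add.commute[of j d] funpow_add)
  have sub: "subspace (Ks j)" for j unfolding Ks_def by (rule ker_pow_subspace[OF lf])
  have stab: "Ks i = Ks (Suc i) \<Longrightarrow> Ks (i+m) = Ks i" for i m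
  proof (induction m)
    case (Suc m)
    show ?case
    proof
      show "Ks (i + Suc m) \<subseteq> Ks i"
      proof
        fix y assume "y \<in> Ks (i + Suc m)"
        hence "f y \<in> Ks (i+m)" by (simp add: Ks_def funpow_Suc_right del: funpow.simps)
        hence "f y \<in> Ks i" using Suc by simp
        hence "y \<in> Ks (Suc i)" by (simp add: Ks_def funpow_Suc_right del: funpow.simps)
        thus "y \<in> Ks i" using Suc by simp
      qed
      show "Ks i \<subseteq> Ks (i + Suc m)" using mono[of i "Suc m"] by simp
    qed
  qed simp
  have claim: "(\<exists>i<j. Ks i = Ks (Suc i)) \<or> j \<le> dim (Ks j)" for j
  proof (induction j)
    case (Suc j)
    show ?case
    proof (cases "Ks j = Ks (Suc j)")
      case True thus ?thesis by auto
    next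
      case False
      have "Ks j \<subset> Ks (Suc j)" using False mono[of j 1] by auto
      hence "dim (Ks j) < dim (Ks (Suc j))"
        using dim_psubset[of "Ks j" "Ks (Suc j)"] span_eq_iff[THEN iffD2, OF sub] by simp
      thus ?thesis using Suc by (auto intro: less_SucI)
    qed
  qed simp
  have "dim (Ks (Suc dimension)) \<le> dimension"
    by (metis dim_subset_UNIV dimension_def)
  then obtain i where i: "i < Suc dimension" "Ks i = Ks (Suc i)"
    using claim[of "Suc dimension"] by auto
  have "x \<in> Ks m" using x by (simp add: Ks_def)
  have "Ks m \<subseteq> Ks K"
  proof (cases "m \<le> K")
    case True thus ?thesis using mono[of m "K-m"] by simp
  next
    case False
    have "Ks m = Ks i" using stab[OF i(2), of "m-i"] i d False by simp
    also have "... = Ks K" using stab[OF i(2), of "K-i"] i d by simp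
    finally show ?thesis by simp
  qed
  from subsetD[OF this \<open>x \<in> Ks m\<close>] show ?thesis by (simp add: Ks_def)
qed

lemma range_stab:
  assumes lf: "Vector_Spaces.linear scale scale f" and d: "dimension \<le> K" "K \<le> K'"
  shows "(f^^K) w \<in> range (f^^K')"
proof -
  define R where "R j = range (f^^j)" for j
  have lj: "Vector_Spaces.linear scale scale (f^^j)" for j
    using lin_pow lf by blast
  have mono: "R (j+d) \<subseteq> R j" for j d
    by (auto simp: R_def funpow_add)
  have sub: "subspace (R j)" for j unfolding R_def subspace_def
  proof (intro conjI ballI allI)
    show "0 \<in> range (f^^j)" using lin_0[OF lj] by (metis rangeI)
    show "x + y \<in> range (f^^j)" if xy: "x \<in> range (f^^j)" "y \<in> range (f^^j)" for x y
    proof -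
      obtain a b where "x = (f^^j) a" "y = (f^^j) b" using xy by blast
      hence "x + y = (f^^j) (a + b)" using lj[of j] unfolding Vector_Spaces.linear_iff by simp
      thus ?thesis by blast
    qed
    show "c *s x \<in> range (f^^j)" if xx: "x \<in> range (f^^j)" for c x
    proof -
      obtain a where "x = (f^^j) a" using xx by blast
      hence "c *s x = (f^^j) (c *s a)" using lj[of j] unfolding Vector_Spaces.linear_iff by simp
      thus ?thesis by blast
    qed
  qed
  have RS: "R (Suc j) = f ` R j" for j
    by (simp only: R_def funpow.simps image_comp)
  have stab: "R i = R (Suc i) \<Longrightarrow> R (i+m) = R i" for i m
  proof (induction m)
    case (Suc m)
    have "R (i + Suc m) = f ` R (i+m)" using RS[of "i+m"] by simp
    also have "... = f ` R i" using Suc.IH[OF Suc.prems] by simp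
    also have "... = R i" by (simp only: RS[symmetric] Suc.prems[symmetric])
    finally show ?case .
  qed simp
  have claim: "(\<exists>i<j. R i = R (Suc i)) \<or> j + dim (R j) \<le> dimension" for j
  proof (induction j)
    case 0 thus ?case by (simp add: R_def dimension_def)
  next
    case (Suc j)
    show ?case
    proof (cases "R j = R (Suc j)")
      case True thus ?thesis by auto
    next
      case False
      have "R (Suc j) \<subset> R j" using False mono[of j 1] by auto
      hence "dim (R (Suc j)) < dim (R j)"
        using dim_psubset[of "R (Suc j)" "R j"] span_eq_iff[THEN iffD2, OF sub] by simp
      thus ?thesis using Suc by (auto intro: less_SucI)
    qed
  qed
  obtain i where i: "i < Suc dimension" "R i = R (Suc i)"
    using claim[of "Suc dimension"] by auto
  have "R K = R i" using stab[OF i(2), of "K-i"] i d by simp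
  also have "... = R K'" using stab[OF i(2), of "K'-i"] i d by simp
  finally show ?thesis by (auto simp: R_def)
qed

end



lemma scaleR_cvec: "r *\<^sub>R (x::complex^'n) = complex_of_real r *s x"
  apply (subst vec_eq_iff, rule allI)
  apply (simp only: vector_scaleR_component vector_smult_component)
  apply (simp add: scaleR_conv_of_real)
  done

lemma funpow_add_gen: fixes f :: "complex^'n \<Rightarrow> complex^'n" shows "(\<And>x y. f (x + y) = f x + f y) \<Longrightarrow> (f^^k) (x + y) = (f^^k) x + (f^^k) y"
  by (induction k) auto

lemma funpow_scale_gen: fixes f :: "complex^'n \<Rightarrow> complex^'n" shows "(\<And>x. f (c *s x) = c *s f x) \<Longrightarrow> (f^^k) (c *s x) = c *s (f^^k) x"
  by (induction k) auto

lemma funpow_zero_gen: fixes f :: "complex^'n \<Rightarrow> complex^'n" shows "f 0 = 0 \<Longrightarrow> (f^^k) 0 = 0"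
  by (induction k) auto

lemma funpow_comm_gen: fixes f :: "complex^'n \<Rightarrow> complex^'n" shows "(\<And>x. f (g x) = g (f x)) \<Longrightarrow> (f^^k) (g x) = g ((f^^k) x)"
  by (induction k) auto

locale setting =
  fixes l :: "complex^'n \<Rightarrow> complex^'n \<Rightarrow> complex"
    and A :: "complex^'n \<Rightarrow> complex^'n"
    and lam :: real
  assumes herm: "hermitian_form l"
    and nondeg: "nondegenerate_on l UNIV"
    and anti: "antilinear A"
    and sa: "self_adjoint_wrt l A"
    and lam_pos: "lam > 0"
begin

definition B where "B = shiftop A lam"
definition C where "C = (\<lambda>x. A x + complex_of_real lam *s x)"
definition T where "T = (\<lambda>x. A (A x) - complex_of_real (lam^2) *s x)"

lemma A_add: "A (v + w) = A v + A w"
  using anti unfolding antilinear_def by (metis vec.scale_one complex_cnj_one)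

lemma A_0: "A 0 = 0"
  using A_add[of 0 0] by simp

lemma A_scale: "A (z *s v) = cnj z *s A v"
  using anti A_0 unfolding antilinear_def by (metis add.right_neutral)

lemma A_neg: "A (- v) = - A v"
  using A_add[of v "-v"] A_0 by (simp add: eq_neg_iff_add_eq_0 add.commute)

lemma A_diff: "A (v - w) = A v - A w"
  using A_add[of v "-w"] A_neg by simp

lemma A_real: "A (complex_of_real r *s v) = complex_of_real r *s A v"
  by (simp add: A_scale)

lemma l_add_l: "l (u + v) w = l u w + l v w"
  using herm unfolding hermitian_form_def by (metis vec.scale_one mult_1)
lemma l_scale_l: "l (z *s u) w = z * l u w"
  using herm unfolding hermitian_form_def by (metis add.right_neutral l_add_l add_cancel_right_right)
lemma l_add_r: "l w (u + v) = l w u + l w v"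
  using herm unfolding hermitian_form_def by (metis vec.scale_one mult_1 complex_cnj_one)
lemma l_scale_r: "l w (z *s u) = cnj z * l w u"
  using herm unfolding hermitian_form_def by (metis add.right_neutral l_add_r add_cancel_right_right)
lemma l_sym: "l v w = cnj (l w v)"
  using herm unfolding hermitian_form_def by blast
lemma l_0_l: "l 0 w = 0" using l_add_l[of 0 0 w] by simp
lemma l_0_r: "l w 0 = 0" using l_add_r[of w 0 0] by simp
lemma l_diff_l: "l (u - v) w = l u w - l v w"
  using l_add_l[of u "-v" w] l_scale_l[of "-1" v w] by (simp add: vec.scale_minus_left)
lemma l_diff_r: "l w (u - v) = l w u - l w v"
  using l_add_r[of w u "-v"] l_scale_r[of w "-1" v] by (simp add: vec.scale_minus_left)
lemma g_sym: "Re (l v w) = Re (l w v)"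
  by (subst l_sym) simp
lemma lA: "l (A x) y = l (A y) x"
  using sa unfolding self_adjoint_wrt_def by blast

lemma B_eq: "B x = A x - complex_of_real lam *s x"
  by (simp add: B_def shiftop_def)

lemma B_add: "B (x + y) = B x + B y"
  by (simp add: B_eq A_add vec.scale_right_distrib algebra_simps)
lemma C_add: "C (x + y) = C x + C y"
  by (simp add: C_def A_add vec.scale_right_distrib algebra_simps)
lemma T_add: "T (x + y) = T x + T y"
  by (simp add: T_def A_add vec.scale_right_distrib algebra_simps)
lemma B_real: "B (complex_of_real r *s x) = complex_of_real r *s B x"
  by (simp add: B_eq A_real vec.scale_right_diff_distrib vec.scale_scale mult.commute)
lemma C_real: "C (complex_of_real r *s x) = complex_of_real r *s C x"
  by (simp add: C_def A_real vec.scale_right_distrib vec.scale_scale mult.commute)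
lemma T_scale: "T (c *s x) = c *s T x"
  by (simp add: T_def A_scale vec.scale_right_diff_distrib vec.scale_scale mult.commute)
lemma B_0: "B 0 = 0" by (simp add: B_eq A_0)
lemma C_0: "C 0 = 0" by (simp add: C_def A_0)
lemma T_0: "T 0 = 0" by (simp add: T_def A_0)

lemma B_imag: "cnj a = - a \<Longrightarrow> B (a *s x) = (- a) *s C x"
  by (simp add: B_eq C_def A_scale vec.scale_right_distrib vec.scale_scale mult.commute)
lemma C_imag: "cnj a = - a \<Longrightarrow> C (a *s x) = (- a) *s B x"
  by (simp add: B_eq C_def A_scale vec.scale_right_diff_distrib vec.scale_scale mult.commute)

lemma BC: "B (C x) = T x"
  by (simp add: B_eq C_def T_def A_add A_real vec.scale_right_distrib vec.scale_scale power2_eq_square)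
lemma CB: "C (B x) = T x"
  by (simp add: B_eq C_def T_def A_diff A_real vec.scale_right_diff_distrib vec.scale_scale power2_eq_square)
lemma BC_comm: "B (C x) = C (B x)" by (simp add: BC CB)

lemma Bp_add: "(B^^k) (x + y) = (B^^k) x + (B^^k) y" by (rule funpow_add_gen, rule B_add)
lemma Cp_add: "(C^^k) (x + y) = (C^^k) x + (C^^k) y" by (rule funpow_add_gen, rule C_add)
lemma Tp_add: "(T^^k) (x + y) = (T^^k) x + (T^^k) y" by (rule funpow_add_gen, rule T_add)
lemma Bp_real: "(B^^k) (complex_of_real r *s x) = complex_of_real r *s (B^^k) x" by (rule funpow_scale_gen, rule B_real)
lemma Cp_real: "(C^^k) (complex_of_real r *s x) = complex_of_real r *s (C^^k) x" by (rule funpow_scale_gen, rule C_real)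
lemma Tp_scale: "(T^^k) (c *s x) = c *s (T^^k) x" by (rule funpow_scale_gen, rule T_scale)
lemma Bp_0: "(B^^k) 0 = 0" by (rule funpow_zero_gen, rule B_0)
lemma Cp_0: "(C^^k) 0 = 0" by (rule funpow_zero_gen, rule C_0)
lemma Tp_0: "(T^^k) 0 = 0" by (rule funpow_zero_gen, rule T_0)

lemma Bp_C: "(B^^k) (C x) = C ((B^^k) x)" by (rule funpow_comm_gen, rule BC_comm)
lemma Bp_Cp: "(B^^j) ((C^^k) x) = (C^^k) ((B^^j) x)"
  by (induction k arbitrary: x) (auto simp: Bp_C)
lemma Bp_Bp: "(B^^j) ((B^^k) x) = (B^^k) ((B^^j) x)"
  by (metis add.commute comp_apply funpow_add)
lemma Bp_B: "(B^^j) (B x) = B ((B^^j) x)"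
  using Bp_Bp[of j 1] by simp
lemma Cp_C: "(C^^j) (C x) = C ((C^^j) x)"
  by (metis funpow_Suc_right funpow.simps(2) comp_apply)
lemma Tp_CB: "(T^^k) x = (C^^k) ((B^^k) x)"
proof (induction k)
  case (Suc k)
  have "(T^^Suc k) x = T ((C^^k) ((B^^k) x))" using Suc by simp
  also have "... = C (B ((C^^k) ((B^^k) x)))" by (simp add: CB)
  also have "... = C ((C^^k) (B ((B^^k) x)))" using Bp_Cp[of 1 k] by simp
  finally show ?case by (simp add: Cp_C)
qed simp
lemma Tp_BC: "(T^^k) x = (B^^k) ((C^^k) x)"
  by (simp add: Tp_CB Bp_Cp)

lemma BCp_imag: "cnj a = - a \<Longrightarrow> (B^^k) (a *s x) = ((-1)^k * a) *s (C^^k) x \<and> (C^^k) (a *s x) = ((-1)^k * a) *s (B^^k) x"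
proof (induction k)
  case (Suc k)
  have c: "cnj ((-1)^k * a) = - ((-1)^k * a)" using Suc.prems by simp
  show ?case using Suc.IH[OF Suc.prems] B_imag[OF c] C_imag[OF c] by simp
qed simp
lemma Bp_imag: "cnj a = - a \<Longrightarrow> (B^^k) (a *s x) = ((-1)^k * a) *s (C^^k) x" using BCp_imag by blast
lemma Cp_imag: "cnj a = - a \<Longrightarrow> (C^^k) (a *s x) = ((-1)^k * a) *s (B^^k) x" using BCp_imag by blast

lemma gB: "Re (l (B x) y) = Re (l x (B y))"
proof -
  have "Re (l (B x) y) = Re (l (A x) y) - lam * Re (l x y)"
    by (simp add: B_eq l_diff_l l_scale_l)
  moreover have "Re (l x (B y)) = Re (l (A y) x) - lam * Re (l y x)"
    by (simp add: g_sym[of x] B_eq l_diff_l l_scale_l)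
  ultimately show ?thesis by (simp add: lA g_sym)
qed
lemma gC: "Re (l (C x) y) = Re (l x (C y))"
proof -
  have "Re (l (C x) y) = Re (l (A x) y) + lam * Re (l x y)"
    by (simp add: C_def l_add_l l_scale_l)
  moreover have "Re (l x (C y)) = Re (l (A y) x) + lam * Re (l y x)"
    by (simp add: g_sym[of x] C_def l_add_l l_scale_l)
  ultimately show ?thesis by (simp add: lA g_sym)
qed
lemma gBp: "Re (l ((B^^k) x) y) = Re (l x ((B^^k) y))"
proof (induction k arbitrary: y)
  case (Suc k)
  have "Re (l ((B^^Suc k) x) y) = Re (l ((B^^k) x) (B y))" using gB by simp
  also have "... = Re (l x ((B^^k) (B y)))" by (rule Suc)
  finally show ?case by (simp add: Bp_B)
qed simp

lemma orth: "(B^^j) x = 0 \<Longrightarrow> (C^^k) y = 0 \<Longrightarrow> Re (l x y) = 0"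
proof (induction j arbitrary: x k y)
  case 0 thus ?case by (simp add: l_0_l)
next
  case (Suc j)
  note outer = Suc.IH
  note xj = Suc.prems(1)
  show ?case using Suc.prems(2)
  proof (induction k arbitrary: y)
    case 0 thus ?case by (simp add: l_0_r)
  next
    case (Suc k)
    have h1: "Re (l x (C y)) = 0"
      using Suc.IH[of "C y"] Suc.prems by (simp add: Cp_C funpow_Suc_right del: funpow.simps)
    have h2: "Re (l (B x) y) = 0"
      using Suc.prems xj Bp_B[of j x] outer[of "B x" "Suc k" y]
      by simp
    have "C x - B x = complex_of_real (2*lam) *s x"
      by (simp add: C_def B_eq algebra_simps vec.scale_left_distrib[symmetric])
    hence "l (C x) y - l (B x) y = complex_of_real (2*lam) * l x y"
      by (metis l_diff_l l_scale_l)
    hence "Re (l (C x) y) - Re (l (B x) y) = 2 * lam * Re (l x y)"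
      by (metis minus_complex.sel times_complex.sel(1) Re_complex_of_real Im_complex_of_real mult_zero_left diff_zero)
    thus ?case using h1 h2 gC lam_pos by simp
  qed
qed

lemma real_on_ker: "(B^^j) x = 0 \<Longrightarrow> (B^^j) y = 0 \<Longrightarrow> Im (l x y) = 0"
proof -
  assume x: "(B^^j) x = 0" and y: "(B^^j) y = 0"
  have "(C^^j) (\<i> *s y) = 0" using Cp_imag[of \<i> j y] y by simp
  hence "Re (l x (\<i> *s y)) = 0" using orth x by blast
  thus ?thesis by (simp add: l_scale_r)
qed

lemma ker_closed: "(B^^j) x = 0 \<Longrightarrow> (B^^j) ((B^^a) x) = 0"
  by (simp add: Bp_Bp[of j a] Bp_0)

lemma lB_sym: "(B^^j) x = 0 \<Longrightarrow> (B^^j) y = 0 \<Longrightarrow> l (B x) y = l x (B y)"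
proof -
  assume x: "(B^^j) x = 0" and y: "(B^^j) y = 0"
  have hbx: "(B^^j) (B x) = 0" and hby: "(B^^j) (B y) = 0" using ker_closed[of j _ 1] x y by auto
  show ?thesis
    using gB[of x y] real_on_ker[OF hbx y] real_on_ker[OF x hby] by (simp add: complex_eq_iff)
qed

lemma lBp: "(B^^j) x = 0 \<Longrightarrow> (B^^j) y = 0 \<Longrightarrow> l ((B^^a) x) ((B^^b) y) = l x ((B^^(a+b)) y)"
proof (induction a arbitrary: b)
  case (Suc a)
  have "l ((B^^Suc a) x) ((B^^b) y) = l (B ((B^^a) x)) ((B^^b) y)" by simp
  also have "... = l ((B^^a) x) (B ((B^^b) y))"
    using lB_sym ker_closed Suc.prems by blast
  also have "... = l ((B^^a) x) ((B^^Suc b) y)" by simp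
  also have "... = l x ((B^^(a + Suc b)) y)" using Suc by blast
  finally show ?case by simp
qed simp

lemma T_lin: "Vector_Spaces.linear (*s) (*s) T"
  unfolding Vector_Spaces.linear_iff using vec.vector_space_axioms T_add T_scale by blast

lemma B_lin: "linear B"
  by (rule linearI) (simp_all add: B_add scaleR_cvec B_real)

lemma Bp_diff: "(B^^k) (x - y) = (B^^k) x - (B^^k) y"
  using Bp_add[of k "x - y" y] by (simp add: algebra_simps)
lemma Tp_diff: "(T^^k) (x - y) = (T^^k) x - (T^^k) y"
  using Tp_add[of k "x - y" y] by (simp add: algebra_simps)

definition K where "K = DIM(complex^'n) + CARD('n)"
definition s where "s = (LEAST s. s > 0 \<and> gen_eigenspace A lam s = gen_eigenspace A lam CARD('n))"

lemma gen_eq: "gen_eigenspace A lam m = {v. (T^^m) v = 0}"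
  by (simp add: gen_eigenspace_def T_def)

lemma kerB: "(B^^m) x = 0 \<Longrightarrow> (B^^K) x = 0"
  by (rule eucl.ker_stab[OF B_lin]) (auto simp: K_def eucl.dimension_def)

lemma rangeB: "(B^^K) w \<in> range (B^^(K+K))"
  by (rule eucl.range_stab[OF B_lin]) (auto simp: K_def eucl.dimension_def)

lemma kerT: "(T^^m) x = 0 \<Longrightarrow> (T^^CARD('n)) x = 0"
  by (rule vec.ker_stab[OF T_lin]) (auto simp: vec.dimension_def card_cart_basis)

lemma fitting: "\<exists>u y. (B^^K) u = 0 \<and> w = u + (B^^K) y"
proof -
  obtain y where y: "(B^^K) w = (B^^(K+K)) y" using rangeB by blast
  have "(B^^K) (w - (B^^K) y) = 0"
    using y by (simp add: Bp_diff funpow_add)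
  thus ?thesis by (metis diff_add_cancel)
qed

lemma N_pos: "0 < CARD('n)" by simp

lemma s_props: "0 < s" "s \<le> CARD('n)" "\<And>x. (T^^s) x = 0 \<longleftrightarrow> (T^^CARD('n)) x = 0"
proof -
  let ?P = "\<lambda>s. s > 0 \<and> gen_eigenspace A lam s = gen_eigenspace A lam CARD('n)"
  have PN: "?P CARD('n)" by simp
  have Ps: "?P s" unfolding s_def by (rule LeastI[of ?P, OF PN])
  show "0 < s" using Ps by simp
  show "s \<le> CARD('n)" unfolding s_def by (rule Least_le[of ?P, OF PN])
  show "(T^^s) x = 0 \<longleftrightarrow> (T^^CARD('n)) x = 0" for x
    using Ps by (simp add: gen_eq set_eq_iff)
qed

lemma C1inj: "(B^^K) y = 0 \<Longrightarrow> C y = 0 \<Longrightarrow> y = 0"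
proof -
  assume k: "(B^^K) y = 0" and c: "C y = 0"
  have "A y = - (complex_of_real lam *s y)" using c unfolding C_def by (simp add: eq_neg_iff_add_eq_0)
  hence b: "B y = complex_of_real (-2*lam) *s y"
    by (simp add: B_eq vec_eq_iff algebra_simps)
  have "(B^^j) y = complex_of_real ((-2*lam)^j) *s y" for j
  proof (induction j)
    case (Suc j)
    have "(B^^Suc j) y = B (complex_of_real ((-2*lam)^j) *s y)" using Suc by simp
    also have "... = complex_of_real ((-2*lam)^j) *s B y" by (rule B_real)
    also have "... = complex_of_real ((-2*lam)^Suc j) *s y"
      unfolding b vec.scale_scale by (simp add: mult.commute)
    finally show ?case .
  qed simp
  hence "complex_of_real ((-2*lam)^K) *s y = 0" using k by simp
  thus "y = 0" using lam_pos by simp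
qed

lemma Cpinj: "(B^^K) y = 0 \<Longrightarrow> (C^^k) y = 0 \<Longrightarrow> y = 0"
proof (induction k arbitrary: y)
  case (Suc k)
  have "(B^^K) (C y) = 0" using Suc.prems by (simp add: Bp_C C_0)
  moreover have "(C^^k) (C y) = 0" using Suc.prems by (simp add: funpow_Suc_right del: funpow.simps)
  ultimately have "C y = 0" using Suc.IH by blast
  thus ?case using C1inj Suc.prems by blast
qed simp

lemma a_lem: "(B^^K) z = 0 \<Longrightarrow> (B^^s) z = 0"
proof -
  assume z: "(B^^K) z = 0"
  have "(T^^K) z = 0" using z by (simp add: Tp_CB Cp_0)
  hence "(T^^s) z = 0" using kerT s_props(3) by blast
  hence "(C^^s) ((B^^s) z) = 0" by (simp add: Tp_CB)
  moreover have "(B^^K) ((B^^s) z) = 0" using ker_closed z by blast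
  ultimately show ?thesis using Cpinj by blast
qed

lemma K_ge: "CARD('n) \<le> K" by (simp add: K_def)

lemma Tp_ge: "(T^^m) x = 0 \<Longrightarrow> m \<le> m' \<Longrightarrow> (T^^m') x = 0"
  by (metis Tp_0 funpow_add le_add_diff_inverse2 comp_apply)

lemma b_lem:
  assumes eig: "\<exists>v. v \<noteq> 0 \<and> A (A v) = complex_of_real (lam^2) *s v"
  shows "\<exists>z. (B^^K) z = 0 \<and> (B^^(s-1)) z \<noteq> 0"
proof -
  obtain w where w1: "(T^^CARD('n)) w = 0" and w2: "(T^^(s-1)) w \<noteq> 0"
  proof (cases "s = 1")
    case True
    obtain v0 where v0: "v0 \<noteq> 0" "A (A v0) = complex_of_real (lam^2) *s v0" using eig by blast
    have "T v0 = 0" using v0 by (simp add: T_def)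
    hence "(T^^CARD('n)) v0 = 0" using Tp_ge[of 1 v0 "CARD('n)"] by simp
    thus ?thesis using that[of v0] True v0 by simp
  next
    case False
    hence "s - 1 < s" "0 < s - 1" using s_props(1) by auto
    hence "gen_eigenspace A lam (s-1) \<noteq> gen_eigenspace A lam CARD('n)"
      using not_less_Least[of "s-1" "\<lambda>s. s > 0 \<and> gen_eigenspace A lam s = gen_eigenspace A lam CARD('n)"]
      unfolding s_def by blast
    moreover have "gen_eigenspace A lam (s-1) \<subseteq> gen_eigenspace A lam CARD('n)"
      using Tp_ge[of "s-1" _ "CARD('n)"] s_props(2) by (auto simp: gen_eq)
    ultimately obtain w where "w \<in> gen_eigenspace A lam CARD('n)" "w \<notin> gen_eigenspace A lam (s-1)"
      by blast
    thus ?thesis using that by (simp add: gen_eq)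
  qed
  obtain u y where u: "(B^^K) u = 0" and wuy: "w = u + (B^^K) y" using fitting by blast
  define u' where "u' = (B^^K) y"
  have "(T^^K) w = 0" using Tp_ge[OF w1 K_ge] .
  moreover have "(T^^K) u = 0" using u by (simp add: Tp_CB Cp_0)
  ultimately have "(T^^K) u' = 0" using wuy u'_def Tp_add by (metis add_0)
  hence "(B^^K) ((C^^K) u') = 0" by (simp add: Tp_BC)
  hence "(B^^(K+K)) ((C^^K) y) = 0" by (simp add: u'_def funpow_add Bp_Cp)
  hence "(B^^K) ((C^^K) y) = 0" using kerB by blast
  hence cu: "(C^^K) u' = 0" by (simp add: u'_def Bp_Cp)
  show ?thesis
  proof (rule ccontr)
    assume "\<not> ?thesis"
    hence H: "\<And>z. (B^^K) z = 0 \<Longrightarrow> (B^^(s-1)) z = 0" by blast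
    have bu: "(B^^(s-1)) u = 0" using H u by blast
    have "(B^^K) (\<i> *s u') = 0" using Bp_imag[of \<i> K u'] cu by simp
    hence "(B^^(s-1)) (\<i> *s u') = 0" using H by blast
    hence "((-1)^(s-1) * \<i>) *s (C^^(s-1)) u' = 0" using Bp_imag[of \<i> "s-1" u'] by simp
    hence cu1: "(C^^(s-1)) u' = 0" by simp
    have "(T^^(s-1)) w = (T^^(s-1)) u + (T^^(s-1)) u'" using wuy u'_def Tp_add by simp
    also have "... = 0" using bu cu1 Tp_CB[of "s-1" u] Tp_BC[of "s-1" u'] Cp_0 Bp_0 by simp
    finally show False using w2 by simp
  qed
qed

lemma c_lem: "(B^^K) z = 0 \<Longrightarrow> (\<And>y. (B^^K) y = 0 \<Longrightarrow> Re (l z y) = 0) \<Longrightarrow> z = 0"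
proof -
  assume z: "(B^^K) z = 0" and H: "\<And>y. (B^^K) y = 0 \<Longrightarrow> Re (l z y) = 0"
  have re: "Re (l z w) = 0" for w
  proof -
    obtain u y where u: "(B^^K) u = 0" and wuy: "w = u + (B^^K) y" using fitting by blast
    have "Re (l z ((B^^K) y)) = Re (l ((B^^K) z) y)" using gBp g_sym by metis
    also have "... = 0" using z by (simp add: l_0_l)
    finally show ?thesis using H[OF u] wuy by (simp add: l_add_r)
  qed
  have "l z w = 0" for w
  proof -
    have "Re (l z (\<i> *s w)) = 0" by (rule re)
    hence "Im (l z w) = 0" by (simp add: l_scale_r)
    thus ?thesis using re[of w] by (simp add: complex_eq_iff)
  qed
  thus "z = 0" using nondeg unfolding nondegenerate_on_def by blast
qed

lemma d_lem:
  assumes eig: "\<exists>v. v \<noteq> 0 \<and> A (A v) = complex_of_real (lam^2) *s v"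
  shows "\<exists>v. (B^^K) v = 0 \<and> l ((B^^(s-1)) v) v \<noteq> 0"
proof (rule ccontr)
  assume "\<not> ?thesis"
  hence H: "\<And>v. (B^^K) v = 0 \<Longrightarrow> l ((B^^(s-1)) v) v = 0" by blast
  obtain z0 where z0: "(B^^K) z0 = 0" "(B^^(s-1)) z0 \<noteq> 0" using b_lem[OF eig] by blast
  define z' where "z' = (B^^(s-1)) z0"
  have z'k: "(B^^K) z' = 0" using ker_closed z0(1) z'_def by blast
  have "Re (l z' y) = 0" if y: "(B^^K) y = 0" for y
  proof -
    have "(B^^K) (z0 + y) = 0" using y z0 by (simp add: Bp_add)
    hence "0 = l ((B^^(s-1)) (z0 + y)) (z0 + y)" using H by simp
    also have "... = l z' z0 + l z' y + l ((B^^(s-1)) y) z0 + l ((B^^(s-1)) y) y"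
      by (simp add: z'_def Bp_add l_add_l l_add_r)
    also have "... = l z' y + l ((B^^(s-1)) y) z0"
      using H[OF y] H[OF z0(1)] z'_def by simp
    finally have "Re (l z' y) + Re (l ((B^^(s-1)) y) z0) = 0" by (metis plus_complex.sel(1) zero_complex.sel(1))
    moreover have "Re (l ((B^^(s-1)) y) z0) = Re (l z' y)"
      using gBp[of "s-1" y z0] g_sym z'_def by metis
    ultimately show ?thesis by simp
  qed
  hence "z' = 0" using c_lem z'k by blast
  thus False using z0 z'_def by simp
qed

lemma l_sum_l: "finite S \<Longrightarrow> l (sum f S) w = (\<Sum>i\<in>S. l (f i) w)"
  by (induction S rule: finite_induct) (simp_all add: l_0_l l_add_l)
lemma A_sum: "finite S \<Longrightarrow> A (sum f S) = (\<Sum>i\<in>S. A (f i))"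
  by (induction S rule: finite_induct) (simp_all add: A_0 A_add)

lemma final:
  assumes eig: "\<exists>v. v \<noteq> 0 \<and> A (A v) = complex_of_real (lam^2) *s v"
  shows "\<exists>v. (T^^CARD('n)) v = 0 \<and> (B^^s) v = 0 \<and>
    vec.dim (vec.span ((\<lambda>k. (B^^k) v) ` {..<s})) = s \<and>
    A ` vec.span ((\<lambda>k. (B^^k) v) ` {..<s}) \<subseteq> vec.span ((\<lambda>k. (B^^k) v) ` {..<s}) \<and>
    nondegenerate_on l (vec.span ((\<lambda>k. (B^^k) v) ` {..<s}))"
proof -
  obtain v where vK: "(B^^K) v = 0" and c0: "l ((B^^(s-1)) v) v \<noteq> 0" using d_lem[OF eig] by blast
  define x where "x j = (B^^j) v" for j
  have vs: "(B^^s) v = 0" using a_lem vK by blast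
  have xz: "x j = 0" if "s \<le> j" for j
  proof -
    have "x j = (B^^(j-s)) ((B^^s) v)" unfolding x_def
      by (metis that funpow_add comp_apply le_add_diff_inverse2)
    thus ?thesis using vs Bp_0 by simp
  qed
  have gram: "l (x j) (x k) = l v (x (j+k))" for j k
    unfolding x_def using lBp[OF vK vK, of j k] by simp
  have gram0: "l (x j) (x k) = 0" if "s \<le> j + k" for j k
    using gram xz[OF that] l_0_r by simp
  define m where "m = l v (x (s-1))"
  have m: "m \<noteq> 0"
  proof -
    have "l (x (s-1)) (x 0) = m" using gram[of "s-1" 0] m_def by simp
    thus ?thesis using c0 by (simp add: x_def)
  qed
  have claim: "a j = 0" if H: "\<And>k. k < s \<Longrightarrow> l (\<Sum>j<s. a j *s x j) (x k) = 0" and j: "j < s" for a j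
  proof (rule ccontr)
    assume aj: "a j \<noteq> 0"
    define j0 where "j0 = (LEAST j. j < s \<and> a j \<noteq> 0)"
    have j0: "j0 < s" "a j0 \<noteq> 0" using LeastI[of "\<lambda>j. j<s \<and> a j \<noteq> 0" j] j aj unfolding j0_def by auto
    have lt: "a i = 0" if "i < j0" for i
      using not_less_Least[of i "\<lambda>j. j<s \<and> a j \<noteq> 0"] that j0 unfolding j0_def by auto
    define k0 where "k0 = s - 1 - j0"
    have k0: "k0 < s" using j0 by (simp add: k0_def)
    have trm: "a i * l (x i) (x k0) = (if i = j0 then a j0 * m else 0)" if "i < s" for i
    proof (cases "i < j0")
      case True thus ?thesis using lt by simp
    next
      case False
      show ?thesis
      proof (cases "i = j0")
        case True
        have "j0 + k0 = s - 1" using j0 by (simp add: k0_def)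
        thus ?thesis using True gram[of j0 k0] m_def by simp
      next
        case False2: False
        hence "s \<le> i + k0" using False j0 by (simp add: k0_def)
        thus ?thesis using gram0 False2 by simp
      qed
    qed
    have "l (\<Sum>j<s. a j *s x j) (x k0) = (\<Sum>i<s. a i * l (x i) (x k0))"
      by (simp add: l_sum_l l_scale_l)
    also have "... = (\<Sum>i<s. if i = j0 then a j0 * m else 0)" using trm by (intro sum.cong) auto
    also have "... = a j0 * m" using j0 by simp
    finally show False using H[OF k0] j0 m by simp
  qed
  define X where "X = x ` {..<s}"
  have Xeq: "(\<lambda>k. (B^^k) v) ` {..<s} = X" unfolding X_def x_def by simp
  define V where "V = vec.span X"
  have xV: "x k \<in> V" for k
  proof (cases "k < s")
    case True thus ?thesis unfolding V_def X_def by (intro vec.span_base) auto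
  next
    case False thus ?thesis using xz[of k] vec.span_zero V_def by simp
  qed
  define S where "S = {y. \<exists>a. y = (\<Sum>j<s. a j *s x j)}"
  have subS: "vec.subspace S"
    unfolding vec.subspace_def
  proof (intro conjI ballI allI)
    show "0 \<in> S" unfolding S_def by (rule CollectI, rule exI[of _ "\<lambda>_. 0"]) simp
    show "y1 + y2 \<in> S" if yy: "y1 \<in> S" "y2 \<in> S" for y1 y2
    proof -
      obtain a b where "y1 = (\<Sum>j<s. a j *s x j)" "y2 = (\<Sum>j<s. b j *s x j)" using yy S_def by blast
      hence "y1 + y2 = (\<Sum>j<s. (a j + b j) *s x j)" by (simp add: sum.distrib vec.scale_left_distrib)
      thus ?thesis unfolding S_def by (intro CollectI exI[of _ "\<lambda>j. a j + b j"])
    qed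
    show "c *s y \<in> S" if yy: "y \<in> S" for c y
    proof -
      obtain a where "y = (\<Sum>j<s. a j *s x j)" using yy S_def by blast
      hence "c *s y = (\<Sum>j<s. (c * a j) *s x j)" by (simp add: vec.scale_sum_right vec.scale_scale)
      thus ?thesis unfolding S_def by (intro CollectI exI[of _ "\<lambda>j. c * a j"])
    qed
  qed
  have XS: "X \<subseteq> S"
  proof
    fix y assume "y \<in> X"
    then obtain k where k: "k < s" "y = x k" unfolding X_def by auto
    have "(\<Sum>j<s. (if j = k then 1 else 0) *s x j) = (\<Sum>j<s. if j = k then x k else 0)"
      by (intro sum.cong) auto
    also have "... = x k" using k by simp
    finally show "y \<in> S" unfolding S_def using k by (intro CollectI exI[of _ "\<lambda>j. if j = k then 1 else 0"]) simp
  qed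
  have VS: "V \<subseteq> S" unfolding V_def using vec.span_minimal[OF XS subS] .
  have inv: "A ` V \<subseteq> V"
  proof
    fix z assume "z \<in> A ` V"
    then obtain y where y: "y \<in> V" "z = A y" by blast
    then obtain a where ya: "y = (\<Sum>j<s. a j *s x j)" using VS S_def by blast
    have Ax: "A (x j) = x (Suc j) + complex_of_real lam *s x j" for j
      unfolding x_def using B_eq[of "(B^^j) v"] by simp
    have "z = (\<Sum>j<s. A (a j *s x j))"
      using y ya by (simp add: A_sum)
    also have "... = (\<Sum>j<s. cnj (a j) *s (x (Suc j) + complex_of_real lam *s x j))"
      by (intro sum.cong refl) (simp only: A_scale Ax)
    also have "... \<in> V" unfolding V_def
    proof (intro vec.span_sum vec.span_scale vec.span_add)
      show "x (Suc j) \<in> vec.span X" "x j \<in> vec.span X" for j using xV unfolding V_def by auto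
    qed
    finally show "z \<in> V" .
  qed
  have nd: "nondegenerate_on l V"
    unfolding nondegenerate_on_def
  proof (intro ballI impI)
    fix y assume y: "y \<in> V" and H: "\<forall>z\<in>V. l y z = 0"
    then obtain a where ya: "y = (\<Sum>j<s. a j *s x j)" using VS S_def by blast
    have "a j = 0" if "j < s" for j
      using claim[of a j] H xV ya that by blast
    thus "y = 0" using ya by simp
  qed
  have inj: "inj_on x {..<s}"
  proof (rule inj_onI, rule ccontr)
    fix i j assume i: "i \<in> {..<s}" and j: "j \<in> {..<s}" and eq: "x i = x j" and ne: "i \<noteq> j"
    define a where "a t = (if t = i then 1 else 0) - (if t = j then 1 else (0::complex))" for t
    have "(\<Sum>t<s. a t *s x t) = (\<Sum>t<s. (if t = i then x i else 0) - (if t = j then x j else 0))"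
      unfolding a_def by (intro sum.cong) (auto simp: vec.scale_left_diff_distrib)
    also have "... = 0" using i j eq by (simp add: sum_subtractf)
    finally have "a i = 0" using claim[of a i] i by (simp add: l_0_l)
    thus False using ne by (simp add: a_def)
  qed
  have indep: "vec.independent X"
    unfolding vec.independent_explicit
  proof (intro conjI allI impI ballI)
    show "finite X" unfolding X_def by simp
    fix c y assume H: "(\<Sum>v\<in>X. c v *s v) = 0" and y: "y \<in> X"
    have "(\<Sum>j<s. c (x j) *s x j) = 0"
      using H unfolding X_def sum.reindex[OF inj] by (simp add: o_def)
    moreover obtain j where "j < s" "y = x j" using y X_def by auto
    ultimately show "c y = 0" using claim[of "\<lambda>j. c (x j)" j] by (simp add: l_0_l)
  qed
  have dim: "vec.dim V = s"
  proof -
    have "vec.dim V = vec.dim X" unfolding V_def by (rule vec.dim_span)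
    also have "... = card X" by (rule vec.dim_eq_card_independent[OF indep])
    also have "... = s" unfolding X_def using card_image[OF inj] by simp
    finally show ?thesis .
  qed
  have Tv: "(T^^CARD('n)) v = 0"
  proof -
    have "(B^^CARD('n)) v = 0" using xz[OF s_props(2)] unfolding x_def .
    thus ?thesis using Tp_CB[of "CARD('n)" v] Cp_0 by simp
  qed
  show ?thesis
    apply (rule exI[of _ v])
    unfolding Xeq using Tv vs dim inv nd unfolding V_def by (intro conjI)
qed

end


theorem mainTheorem9:
  fixes l :: "complex^'n \<Rightarrow> complex^'n \<Rightarrow> complex"
    and A :: "complex^'n \<Rightarrow> complex^'n"
    and lam :: real
  assumes herm: "hermitian_form l"
    and nondeg: "nondegenerate_on l UNIV"
    and anti: "antilinear A"
    and sa: "self_adjoint_wrt l A"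
    and lam_pos: "lam > 0"
    and eig: "\<exists>v. v \<noteq> 0 \<and> A (A v) = complex_of_real (lam^2) *s v"
  shows "let s1 = (LEAST s. s > 0 \<and> gen_eigenspace A lam s = gen_eigenspace A lam CARD('n))
         in \<exists>v \<in> gen_eigenspace A lam CARD('n).
              (shiftop A lam ^^ s1) v = 0 \<and>
              (let V = vec.span {(shiftop A lam ^^ k) v | k. k < s1}
               in vec.dim V = s1 \<and> A ` V \<subseteq> V \<and> nondegenerate_on l V)"
proof -
  interpret setting l A lam using herm nondeg anti sa lam_pos by unfold_locales
  obtain v where v: "(T^^CARD('n)) v = 0" "(B^^s) v = 0"
    "vec.dim (vec.span ((\<lambda>k. (B^^k) v) ` {..<s})) = s"
    "A ` vec.span ((\<lambda>k. (B^^k) v) ` {..<s}) \<subseteq> vec.span ((\<lambda>k. (B^^k) v) ` {..<s})"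
    "nondegenerate_on l (vec.span ((\<lambda>k. (B^^k) v) ` {..<s}))"
    using final[OF eig] by blast
  have seteq: "{(B ^^ k) v | k. k < s} = (\<lambda>k. (B^^k) v) ` {..<s}"
    by auto
  have vg: "v \<in> gen_eigenspace A lam CARD('n)" using v(1) by (simp add: gen_eq)
  show ?thesis
    unfolding Let_def s_def[symmetric]
    apply (rule bexI[OF _ vg])
    unfolding B_def[symmetric] seteq using v by (intro conjI)
qed

end
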